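(* Let $S$ be a non-empty finite set of strings and run the algorithm Greedy-R on $S$. After the initial call to Make-Reverse-Factor-Free, the current set $S$ remains reverse-factor-free after each iteration of the while loop.
   Context: For strings $x,y$, $\mathit{ov}(x,y)$ is the length of the longest suffix of $x$ that is also a prefix of $y$; $\mathrm{pref}(x,y)$ is $x$ with its suffix of length $\mathit{ov}(x,y)$ removed, and $x\otimes y=\mathrm{pref}(x,y)\,y$. $x^R$ denotes the reversal of $x$. For a set $X$ of strings, $\widetilde{X}=X\cup\{x^R:x\in X\}$. A set $X$ is reverse-factor-free if there are no distinct $x,y\in X$ such that $x$ is a factor of $y$ or of $y^R$. The procedure Make-Reverse-Factor-Free$(X)$ repeatedly removes from the current set a string $x$ for which some other string $y\neq x$ of the current set has $x$ as a factor of $y$ or of $y^R$, until no such string remains. Algorithm Greedy-R$(S)$: first set $S:=$ Make-Reverse-Factor-Free$(S)$. Then, while $|S|>1$: among all pairs $(u,v)$ with $u,v\in\widetilde{S}$ and $u\notin\{v,v^R\}$, choose one with maximal $\mathit{ov}(u,v)$ (ties broken arbitrarily); set $S:=S\cup\{u\otimes v\}$ and then remove from $S$ all of $u,v,u^R,v^R$ that belong to $S$. Return the only element of $S$. *)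

theory Defs
  imports Main
begin

definition is_factor :: "'a list \<Rightarrow> 'a list \<Rightarrow> bool" where
  "is_factor x y \<longleftrightarrow> (\<exists>p s. y = p @ x @ s)"

definition ov :: "'a list \<Rightarrow> 'a list \<Rightarrow> nat" where
  "ov x y = (GREATEST k. k \<le> length x \<and> k \<le> length y \<and>
                         drop (length x - k) x = take k y)"

definition pref :: "'a list \<Rightarrow> 'a list \<Rightarrow> 'a list" where
  "pref x y = take (length x - ov x y) x"

definition merge :: "'a list \<Rightarrow> 'a list \<Rightarrow> 'a list" where
  "merge x y = pref x y @ y"

definition tilde :: "'a list set \<Rightarrow> 'a list set" where
  "tilde X = X \<union> rev ` X"

definition reverse_factor_free :: "'a list set \<Rightarrow> bool" where
  "reverse_factor_free X \<longleftrightarrow>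
     \<not> (\<exists>x\<in>X. \<exists>y\<in>X. x \<noteq> y \<and> (is_factor x y \<or> is_factor x (rev y)))"

definition mrff_step :: "'a list set \<Rightarrow> 'a list set \<Rightarrow> bool" where
  "mrff_step S S' \<longleftrightarrow>
     (\<exists>x\<in>S. \<exists>y\<in>S. y \<noteq> x \<and> (is_factor x y \<or> is_factor x (rev y)) \<and> S' = S - {x})"

text \<open>T is a possible output of Make-Reverse-Factor-Free on S (any removal order).\<close>
definition mrff_result :: "'a list set \<Rightarrow> 'a list set \<Rightarrow> bool" where
  "mrff_result S T \<longleftrightarrow> mrff_step\<^sup>*\<^sup>* S T \<and> \<not> (\<exists>T'. mrff_step T T')"

definition admissible_pair :: "'a list set \<Rightarrow> 'a list \<Rightarrow> 'a list \<Rightarrow> bool" where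
  "admissible_pair S u v \<longleftrightarrow> u \<in> tilde S \<and> v \<in> tilde S \<and> u \<noteq> v \<and> u \<noteq> rev v"

text \<open>One iteration of the while loop of Greedy-R (ties broken arbitrarily).\<close>
definition greedy_step :: "'a list set \<Rightarrow> 'a list set \<Rightarrow> bool" where
  "greedy_step S S' \<longleftrightarrow> card S > 1 \<and>
     (\<exists>u v. admissible_pair S u v \<and>
        (\<forall>u' v'. admissible_pair S u' v' \<longrightarrow> ov u' v' \<le> ov u v) \<and>
        S' = insert (merge u v) S - {u, v, rev u, rev v})"

end

theory Submission
  imports Defs
begin

lemma ov_bound: "ov x y \<le> length x \<and> ov x y \<le> length y \<and>
   drop (length x - ov x y) x = take (ov x y) y"
proof -
  let ?P = "\<lambda>k. k \<le> length x \<and> k \<le> length y \<and> drop (length x - k) x = take k y"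
  have "?P (Greatest ?P)" by (rule GreatestI_nat[where k=0 and b="length x"]) auto
  thus ?thesis unfolding ov_def .
qed

lemma ov_ge: "k \<le> length x \<Longrightarrow> k \<le> length y \<Longrightarrow> drop (length x - k) x = take k y
  \<Longrightarrow> k \<le> ov x y"
  unfolding ov_def by (rule Greatest_le_nat[where b="length x"]) auto

lemma merge_eq: "merge u v = u @ drop (ov u v) v"
proof -
  have h: "drop (length u - ov u v) u = take (ov u v) v" using ov_bound by blast
  have "merge u v = take (length u - ov u v) u @ take (ov u v) v @ drop (ov u v) v"
    by (simp add: merge_def pref_def)
  also have "\<dots> = u @ drop (ov u v) v" by (simp flip: h)
  finally show ?thesis .
qed

lemma factor_rev1: "is_factor a b \<Longrightarrow> is_factor (rev a) (rev b)"
proof -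
  assume "is_factor a b"
  then obtain p s where "b = p @ a @ s" unfolding is_factor_def by blast
  hence "rev b = rev s @ rev a @ rev p" by simp
  thus ?thesis unfolding is_factor_def by blast
qed
lemma factor_rev: "is_factor (rev a) (rev b) = is_factor a b"
  using factor_rev1[of "rev a" "rev b"] factor_rev1[of a b] by auto
lemma factor_trans: "is_factor a b \<Longrightarrow> is_factor b c \<Longrightarrow> is_factor a c"
proof -
  assume "is_factor a b" "is_factor b c"
  then obtain p s q t where "b = p @ a @ s" "c = q @ b @ t" unfolding is_factor_def by blast
  hence "c = (q @ p) @ a @ (s @ t)" by simp
  thus ?thesis unfolding is_factor_def by blast
qed

lemma straddle:
  assumes w: "merge u v = p @ x @ s" and nu: "\<not> is_factor x u" and nv: "\<not> is_factor x v"
  shows "ov u v < ov u x"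
proof -
  define n where "n = length u - ov u v"
  have ovb: "ov u v \<le> length u" using ov_bound by blast
  have w1: "merge u v = take n u @ v" by (simp add: merge_def pref_def n_def)
  have w2: "merge u v = u @ drop (ov u v) v" by (rule merge_eq)
  have ln: "length (take n u) = n" using ovb by (simp add: n_def)
  have pn: "length p < n"
  proof (rule ccontr)
    assume "\<not> length p < n"
    hence "drop n (p @ x @ s) = drop n p @ x @ s" by simp
    moreover have "drop n (merge u v) = v" using w1 ln by simp
    ultimately have "v = drop n p @ x @ s" using w by simp
    thus False using nv unfolding is_factor_def by blast
  qed
  have px: "length p + length x > length u"
  proof (rule ccontr)
    assume a: "\<not> ?thesis"
    have "take (length u) (merge u v) = u" using w2 by simp
    hence "u = take (length u) (p @ x @ s)" using w by simp
    also have "\<dots> = p @ x @ take (length u - length p - length x) s" using a by simp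
    finally show False using nu unfolding is_factor_def by blast
  qed
  define k where "k = length u - length p"
  have pu: "length p < length u" using pn n_def by simp
  have "drop (length p) u = drop (length p) (take (length u) (merge u v))" using w2 by simp
  also have "\<dots> = take k (drop (length p) (merge u v))" by (simp add: drop_take k_def)
  also have "\<dots> = take k x" using w px k_def by simp
  finally have eq: "drop (length u - k) u = take k x" using pu k_def by simp
  have "k \<le> ov u x" by (rule ov_ge) (use px k_def eq in auto)
  moreover have "ov u v < k" using pn n_def k_def ovb by simp
  ultimately show ?thesis by simp
qed

lemma tilde_cases: "u \<in> tilde S \<Longrightarrow> \<exists>s\<in>S. u = s \<or> u = rev s"
  unfolding tilde_def by auto

lemma rff_D: "reverse_factor_free S \<Longrightarrow> x \<in> S \<Longrightarrow> y \<in> S \<Longrightarrow> x \<noteq> y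
  \<Longrightarrow> \<not> is_factor x y \<and> \<not> is_factor x (rev y)"
  unfolding reverse_factor_free_def by blast

lemma rff_tilde:
  assumes R: "reverse_factor_free S" and u: "u \<in> tilde S" and y: "y \<in> S"
    and "y \<noteq> u" "y \<noteq> rev u"
  shows "\<not> is_factor u y \<and> \<not> is_factor u (rev y) \<and> \<not> is_factor y u \<and> \<not> is_factor (rev y) u"
proof -
  obtain s where s: "s \<in> S" "u = s \<or> u = rev s" using tilde_cases[OF u] by blast
  have sy: "s \<noteq> y" using s assms by auto
  have a: "\<not> is_factor s y \<and> \<not> is_factor s (rev y) \<and> \<not> is_factor y s \<and> \<not> is_factor y (rev s)"
    using rff_D[OF R s(1) y sy] rff_D[OF R y s(1)] sy by blast
  show ?thesis
  proof (cases "u = s")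
    case True
    have "is_factor (rev y) s = is_factor y (rev s)" using factor_rev[of y "rev s"] by simp
    thus ?thesis using a True by simp
  next
    case False
    hence u: "u = rev s" using s(2) by blast
    have "is_factor (rev s) y = is_factor s (rev y)" using factor_rev[of s "rev y"] by simp
    moreover have "is_factor (rev s) (rev y) = is_factor s y" by (rule factor_rev)
    moreover have "is_factor y (rev s) = is_factor y (rev s)" by simp
    moreover have "is_factor (rev y) (rev s) = is_factor y s" by (rule factor_rev)
    ultimately show ?thesis using a u by simp
  qed
qed

lemma step_rff:
  assumes R: "reverse_factor_free S" and G: "greedy_step S S'"
  shows "reverse_factor_free S'"
proof -
  obtain u v where adm: "admissible_pair S u v"
    and mx: "\<forall>u' v'. admissible_pair S u' v' \<longrightarrow> ov u' v' \<le> ov u v"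
    and S': "S' = insert (merge u v) S - {u, v, rev u, rev v}"
    using G unfolding greedy_step_def by blast
  define w where "w = merge u v"
  have uT: "u \<in> tilde S" and vT: "v \<in> tilde S" and uv: "u \<noteq> v" "u \<noteq> rev v"
    using adm unfolding admissible_pair_def by auto
  have uw: "is_factor u w" unfolding w_def merge_eq is_factor_def by auto
  have notw: "\<not> is_factor z w" if z: "z \<in> tilde S" "z \<noteq> u" "z \<noteq> rev u"
      and zu: "\<not> is_factor z u" and zv: "\<not> is_factor z v" for z
  proof
    assume "is_factor z w"
    then obtain p s where "merge u v = p @ z @ s" unfolding is_factor_def w_def by blast
    hence "ov u v < ov u z" using straddle zu zv by blast
    moreover have "admissible_pair S u z" unfolding admissible_pair_def using uT z
      by auto
    ultimately show False using mx by fastforce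
  qed
  show ?thesis unfolding reverse_factor_free_def
  proof (intro notI, elim bexE conjE)
    fix x y assume x: "x \<in> S'" and y: "y \<in> S'" and xy: "x \<noteq> y"
      and f: "is_factor x y \<or> is_factor x (rev y)"
    show False
    proof (cases "x = w")
      case True
      hence yS: "y \<in> S" "y \<noteq> u" "y \<noteq> rev u" using y xy S' w_def by auto
      have "is_factor u y \<or> is_factor u (rev y)" using f True uw factor_trans by blast
      thus False using rff_tilde[OF R uT yS] by blast
    next
      case False
      hence xS: "x \<in> S" "x \<noteq> u" "x \<noteq> rev u" "x \<noteq> v" "x \<noteq> rev v" using x S' w_def by auto
      show False
      proof (cases "y = w")
        case False
        hence "y \<in> S" using y S' w_def by auto
        thus False using rff_D[OF R xS(1) _ xy] f by blast
      next
        case True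
        have xv: "x \<noteq> rev v" "x \<noteq> v" using xS by auto
        have A: "\<not> is_factor x u \<and> \<not> is_factor (rev x) u"
          using rff_tilde[OF R uT xS(1-3)] by blast
        have B: "\<not> is_factor x v \<and> \<not> is_factor (rev x) v"
          using rff_tilde[OF R vT xS(1) xS(4) xS(5)] by blast
        have xT: "x \<in> tilde S" "rev x \<in> tilde S" using xS(1) unfolding tilde_def by auto
        have "\<not> is_factor x w" using notw[OF xT(1) xS(2) xS(3)] A B by blast
        moreover have "\<not> is_factor (rev x) w"
        proof -
          have "rev x \<noteq> u" using xS(3) by auto
          moreover have "rev x \<noteq> rev u" using xS(2) by simp
          ultimately show ?thesis using notw[OF xT(2)] A B by blast
        qed
        moreover have "is_factor x (rev w) = is_factor (rev x) w"
          using factor_rev[of x "rev w"] by simp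
        ultimately show False using f True by simp
      qed
    qed
  qed
qed

theorem lemma1:
  fixes S0 S1 S :: "'a list set"
  assumes "finite S0" and "S0 \<noteq> {}"
    and "mrff_result S0 S1"
    and "greedy_step\<^sup>*\<^sup>* S1 S"
  shows "reverse_factor_free S"
proof -
  have "reverse_factor_free S1"
  proof (rule ccontr)
    assume "\<not> reverse_factor_free S1"
    then obtain x y where xy: "x \<in> S1" "y \<in> S1" "x \<noteq> y"
      "is_factor x y \<or> is_factor x (rev y)"
      unfolding reverse_factor_free_def by blast
    have "mrff_step S1 (S1 - {x})" unfolding mrff_step_def
      by (rule bexI[where x=x], rule bexI[where x=y]) (use xy in auto)
    moreover have "\<not> (\<exists>T'. mrff_step S1 T')" using assms(3) by (simp add: mrff_result_def)
    ultimately show False by blast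
  qed
  with assms(4) show ?thesis
  proof (induction rule: rtranclp_induct)
    case base thus ?case .
  next
    case (step y z) thus ?case using step_rff by blast
  qed
qed

end
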